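(* For each $k\geq1$ let $m_k\in\mathbb{R}$, $\sigma_k>0$, and let $\theta^k$ be the distribution of $|X^k|$ where $X^k$ has normal law $\mathcal{N}(m_k,\sigma_k^2)$. Then $(\theta^k)_k$ satisfies the long-term condition (LTC) if and only if $\sigma_k\to\infty$ as $k\to\infty$.
   Context: For a Borel probability measure $\theta$ on $\mathbb{R}_+$ and $s\geq0$, $TV_s(\theta)=\sup_{Q\in\mathcal{B}(\mathbb{R}_+)}|\theta(Q)-\theta(Q+s)|$. A sequence $(\theta^k)_{k\ge1}$ of such measures satisfies the LTC if for every $S>0$, $\sup_{0\leq s\leq S}TV_s(\theta^k)\to0$ as $k\to\infty$. *)

theory Defs
  imports "HOL-Probability.Probability"
begin

text \<open>Total-variation shift functional TV_s of a Borel probability measure on R_+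
  (represented as a measure on the reals concentrated on [0,oo)).
  The supremum ranges over Borel subsets Q of R_+; Q + s is the translate.\<close>
definition TV_shift :: "real measure \<Rightarrow> real \<Rightarrow> real" where
  "TV_shift \<theta> s =
     (SUP Q \<in> {Q \<in> sets borel. Q \<subseteq> {0..}}. \<bar>measure \<theta> Q - measure \<theta> ((\<lambda>x. x + s) ` Q)\<bar>)"

definition LTC :: "(nat \<Rightarrow> real measure) \<Rightarrow> bool" where
  "LTC \<theta> \<longleftrightarrow> (\<forall>S>0. (\<lambda>k. SUP s \<in> {0..S}. TV_shift (\<theta> k) s) \<longlonglongrightarrow> 0)"

definition abs_normal_law :: "real \<Rightarrow> real \<Rightarrow> real measure" where
  "abs_normal_law m \<sigma> = distr (density lborel (normal_density m \<sigma>)) borel abs"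

end

theory Submission
  imports Defs
begin

abbreviation NN :: "real \<Rightarrow> real \<Rightarrow> real measure" where
  "NN m s \<equiv> density lborel (normal_density m s)"

lemma NN_prob: "0 < s \<Longrightarrow> prob_space (NN m s)"
  using prob_space_normal_density by blast

lemma NN_fin: "0 < s \<Longrightarrow> finite_measure (NN m s)"
  using NN_prob prob_space.axioms(1) by blast

lemma sets_NN[simp, measurable_cong]: "sets (NN m s) = sets borel" by simp

lemma NN_shift:
  assumes A: "A \<in> sets borel"
  shows "emeasure (NN m s) ((\<lambda>x. x - d) -` A) = emeasure (NN (m - d) s) A"
proof -
  have [measurable]: "(\<lambda>x. x - d) -` A \<in> sets borel"
    by (rule measurable_sets_borel[OF _ A]) simp
  have "emeasure (NN m s) ((\<lambda>x. x - d) -` A) =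
      (\<integral>\<^sup>+ x. ennreal (normal_density m s x) * indicator ((\<lambda>x. x - d) -` A) x \<partial>lborel)"
    using A by (subst emeasure_density) auto
  also have "\<dots> = (\<integral>\<^sup>+ x. ennreal (normal_density m s (d + 1 * x)) * indicator ((\<lambda>x. x - d) -` A) (d + 1 * x) \<partial>lborel)"
    using A by (subst nn_integral_real_affine[where c=1 and t=d]) auto
  also have "\<dots> = (\<integral>\<^sup>+ x. ennreal (normal_density (m - d) s x) * indicator A x \<partial>lborel)"
    by (intro nn_integral_cong) (simp add: normal_density_def indicator_def algebra_simps)
  also have "\<dots> = emeasure (NN (m - d) s) A"
    using A by (subst emeasure_density) auto
  finally show ?thesis .
qed

lemma nd_le:
  assumes "0 \<le> d" "m - d/2 \<le> x"
  shows "normal_density (m - d) s x \<le> normal_density m s x"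
proof -
  have e: "(x - (m - d))\<^sup>2 = (x - m)\<^sup>2 + d * (2 * (x - m) + d)"
    by (simp add: power2_eq_square algebra_simps)
  have "0 \<le> d * (2 * (x - m) + d)" using assms by (intro mult_nonneg_nonneg) auto
  hence "(x - m)\<^sup>2 \<le> (x - (m - d))\<^sup>2" using e by linarith
  hence "-(x - (m - d))\<^sup>2 / (2 * s\<^sup>2) \<le> -(x - m)\<^sup>2 / (2 * s\<^sup>2)"
    by (intro divide_right_mono) auto
  thus ?thesis unfolding normal_density_def
    by (intro mult_left_mono) auto
qed

lemma nd_ge:
  assumes "0 \<le> d" "x \<le> m - d/2"
  shows "normal_density m s x \<le> normal_density (m - d) s x"
proof -
  have e: "(x - (m - d))\<^sup>2 = (x - m)\<^sup>2 + d * (2 * (x - m) + d)"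
    by (simp add: power2_eq_square algebra_simps)
  have "d * (2 * (x - m) + d) \<le> 0" using assms by (intro mult_nonneg_nonpos) auto
  hence "(x - (m - d))\<^sup>2 \<le> (x - m)\<^sup>2" using e by linarith
  hence "-(x - m)\<^sup>2 / (2 * s\<^sup>2) \<le> -(x - (m - d))\<^sup>2 / (2 * s\<^sup>2)"
    by (intro divide_right_mono) auto
  thus ?thesis unfolding normal_density_def
    by (intro mult_left_mono) auto
qed

lemma NN_cmp:
  fixes f g :: "real \<Rightarrow> real"
  assumes [measurable]: "f \<in> borel_measurable borel" "g \<in> borel_measurable borel"
  assumes B: "B \<in> sets borel" and le: "\<And>x. x \<in> B \<Longrightarrow> f x \<le> g x"
  shows "emeasure (density lborel f) B \<le> emeasure (density lborel g) B"
  using B by (auto simp: emeasure_density intro!: nn_integral_mono ennreal_leI split: split_indicator intro: le)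

lemma nd_upper: "0 < s \<Longrightarrow> normal_density m s x \<le> 1 / s"
proof -
  assume s: "0 < s"
  have "sqrt (2 * pi * s\<^sup>2) = sqrt (2*pi) * s" using s by (simp add: real_sqrt_mult)
  moreover have "1 \<le> sqrt (2*pi)" using pi_gt3 by simp
  ultimately have "s \<le> sqrt (2 * pi * s\<^sup>2)" using s by simp
  hence "1 / sqrt (2 * pi * s\<^sup>2) \<le> 1 / s" using s by (intro divide_left_mono) auto
  moreover have "exp (-(x - m)\<^sup>2/ (2 * s\<^sup>2)) \<le> 1" by simp
  ultimately have "1 / sqrt (2 * pi * s\<^sup>2) * exp (-(x - m)\<^sup>2/ (2 * s\<^sup>2)) \<le> 1 / s * 1"
    using s by (intro mult_mono) auto
  thus ?thesis unfolding normal_density_def by simp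
qed

lemma NN_Icc_upper:
  assumes s: "0 < s" and ab: "a \<le> b"
  shows "emeasure (NN m s) {a..b} \<le> ennreal ((b - a) / s)"
proof -
  have "emeasure (NN m s) {a..b} \<le> emeasure (density lborel (\<lambda>_. 1 / s)) {a..b}"
    by (rule NN_cmp) (auto intro: nd_upper s)
  also have "\<dots> = ennreal (1/s) * emeasure lborel {a..b}"
    by (simp add: emeasure_density nn_integral_cmult_indicator)
  also have "\<dots> = ennreal ((b - a) / s)" using ab s by (simp add: ennreal_mult'[symmetric])
  finally show ?thesis .
qed

lemma nd_lower:
  assumes s: "0 < s" and x: "\<bar>x - m\<bar> \<le> s"
  shows "1 / (6 * s) \<le> normal_density m s x"
proof -
  have "\<bar>x-m\<bar>\<^sup>2 \<le> s\<^sup>2" using x s by (intro power_mono) auto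
  hence "(x-m)\<^sup>2 \<le> s\<^sup>2" by simp
  hence t: "(x - m)\<^sup>2 / (2 * s\<^sup>2) \<le> 1/2" using s by (simp add: field_simps)
  have "1/2 \<le> 1 + (-(x - m)\<^sup>2 / (2 * s\<^sup>2))" using t by simp
  also have "\<dots> \<le> exp (-(x - m)\<^sup>2 / (2 * s\<^sup>2))" by (rule exp_ge_add_one_self)
  finally have e: "1/2 \<le> exp (-(x - m)\<^sup>2 / (2 * s\<^sup>2))" .
  have "sqrt (2 * pi * s\<^sup>2) = sqrt (2*pi) * s" using s by (simp add: real_sqrt_mult)
  moreover have "sqrt (2*pi) \<le> 3" using pi_less_4 by (simp add: real_sqrt_le_iff real_le_lsqrt)
  ultimately have "sqrt (2 * pi * s\<^sup>2) \<le> 3 * s" using s by simp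
  hence "1 / (3 * s) \<le> 1 / sqrt (2 * pi * s\<^sup>2)" using s by (intro divide_left_mono) auto
  hence "1 / (3 * s) * (1 / 2) \<le> 1 / sqrt (2 * pi * s\<^sup>2) * exp (-(x - m)\<^sup>2 / (2 * s\<^sup>2))"
    using e s by (intro mult_mono) auto
  thus ?thesis unfolding normal_density_def by simp
qed

lemma NN_Icc_lower:
  assumes s: "0 < s"
  shows "ennreal (1/3) \<le> emeasure (NN m s) {m - s..m + s}"
proof -
  have "ennreal (1 / 3) = ennreal (1 / (6 * s)) * emeasure lborel {m - s .. m + s}"
    using s by (simp add: ennreal_mult'[symmetric])
  also have "\<dots> = emeasure (density lborel (\<lambda>_. 1 / (6 * s))) {m - s..m + s}"
    by (simp add: emeasure_density nn_integral_cmult_indicator)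
  also have "\<dots> \<le> emeasure (NN m s) {m - s..m + s}"
    by (rule NN_cmp) (auto intro!: nd_lower s)
  finally show ?thesis .
qed


lemma NN_meas_eq: "0 < s \<Longrightarrow> emeasure (NN m s) X = ennreal (measure (NN m s) X)"
  using NN_fin finite_measure.emeasure_eq_measure by blast

lemma NN_meas_le:
  assumes s: "0 < s" and B: "B \<in> sets borel"
    and le: "\<And>x. x \<in> B \<Longrightarrow> normal_density m' s x \<le> normal_density m s x"
  shows "measure (NN m' s) B \<le> measure (NN m s) B"
proof -
  have "emeasure (NN m' s) B \<le> emeasure (NN m s) B"
    by (rule NN_cmp) (auto intro: le B)
  thus ?thesis using s by (simp add: NN_meas_eq)
qed

lemma split_meas:
  assumes s: "0 < s" and X: "X \<in> sets borel" and Y: "Y \<in> sets borel"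
  shows "measure (NN m s) X = measure (NN m s) (X \<inter> Y) + measure (NN m s) (X - Y)"
proof -
  have "X = (X \<inter> Y) \<union> (X - Y)" by blast
  hence "measure (NN m s) X = measure (NN m s) ((X \<inter> Y) \<union> (X - Y))" by simp
  also have "\<dots> = measure (NN m s) (X \<inter> Y) + measure (NN m s) (X - Y)"
    using X Y by (intro finite_measure.finite_measure_Union[OF NN_fin[OF s]]) auto
  finally show ?thesis .
qed

lemma NN_Icc_meas:
  assumes s: "0 < s" and ab: "a \<le> b"
  shows "measure (NN m s) {a..b} \<le> (b - a) / s"
proof -
  have "ennreal (measure (NN m s) {a..b}) \<le> ennreal ((b - a) / s)"
    using NN_Icc_upper[OF s ab, of m] s by (simp add: NN_meas_eq)
  thus ?thesis using s ab by simp
qed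

lemma K:
  assumes s: "0 < s" and d: "0 \<le> d" and A: "A \<in> sets borel"
  shows "\<bar>measure (NN m s) A - measure (NN m s) ((\<lambda>x. x - d) -` A)\<bar> \<le> d / s"
proof -
  define c where "c = m - d/2"
  have pre: "measure (NN m s) ((\<lambda>x. x - d) -` X) = measure (NN (m - d) s) X" if "X \<in> sets borel" for X
    using NN_shift[OF that, of m s d] by (simp add: measure_def)
  have c1: "measure (NN (m - d) s) B \<le> measure (NN m s) B" if "B \<in> sets borel" "B \<subseteq> {c..}" for B
    using that by (intro NN_meas_le s) (auto intro!: nd_le d simp: c_def)
  have c2: "measure (NN m s) B \<le> measure (NN (m - d) s) B" if "B \<in> sets borel" "B \<subseteq> {..<c}" for B
    using that by (intro NN_meas_le s) (auto intro!: nd_ge d simp: c_def)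
  have I: "measure (NN m s) {c..c+d} \<le> d / s" using NN_Icc_meas[OF s, of c "c+d" m] d by simp
  have Hb: "{c..} \<in> sets borel" "{..<c} \<in> sets borel" by auto
  have f1: "measure (NN (m - d) s) ({c..} - A) \<le> measure (NN m s) ({c..} - A)"
    using A by (intro c1) auto
  have f2: "measure (NN m s) (A - {c..}) \<le> measure (NN (m - d) s) (A - {c..})"
    using A by (intro c2) auto
  have f3: "measure (NN (m - d) s) (A - {..<c}) \<le> measure (NN m s) (A - {..<c})"
    using A by (intro c1) auto
  have f4: "measure (NN m s) ({..<c} - A) \<le> measure (NN (m - d) s) ({..<c} - A)"
    using A by (intro c2) auto
  have ic: "{c..} \<inter> A = A \<inter> {c..}" "{..<c} \<inter> A = A \<inter> {..<c}" by auto
  have up: "measure (NN m s) A - measure (NN (m - d) s) A \<le> measure (NN m s) {c..} - measure (NN (m - d) s) {c..}"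
    using split_meas[OF s A Hb(1), of m] split_meas[OF s A Hb(1), of "m - d"]
      split_meas[OF s Hb(1) A, of m] split_meas[OF s Hb(1) A, of "m - d"] f1 f2
    unfolding ic by linarith
  have lo: "measure (NN (m - d) s) A - measure (NN m s) A \<le> measure (NN (m - d) s) {..<c} - measure (NN m s) {..<c}"
    using split_meas[OF s A Hb(2), of m] split_meas[OF s A Hb(2), of "m - d"]
      split_meas[OF s Hb(2) A, of m] split_meas[OF s Hb(2) A, of "m - d"] f3 f4
    unfolding ic by linarith
  have e1: "(\<lambda>x. x - d) -` {c..} = {c+d..}" by auto
  have e2: "(\<lambda>x. x - d) -` {..<c} = {..<c+d}" by auto
  have u1: "measure (NN m s) {c..} - measure (NN (m - d) s) {c..} \<le> d / s"
  proof -
    have "measure (NN (m - d) s) {c..} = measure (NN m s) {c+d..}" using pre[of "{c..}"] e1 by simp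
    moreover have "measure (NN m s) {c..} - measure (NN m s) {c+d..} = measure (NN m s) ({c..} - {c+d..})"
      using d by (subst finite_measure.finite_measure_Diff[OF NN_fin[OF s]]) auto
    moreover have "measure (NN m s) ({c..} - {c+d..}) \<le> measure (NN m s) {c..c+d}"
      by (intro finite_measure.finite_measure_mono[OF NN_fin[OF s]]) auto
    ultimately show ?thesis using I by linarith
  qed
  have u2: "measure (NN (m - d) s) {..<c} - measure (NN m s) {..<c} \<le> d / s"
  proof -
    have "measure (NN (m - d) s) {..<c} = measure (NN m s) {..<c+d}" using pre[of "{..<c}"] e2 by simp
    moreover have "measure (NN m s) {..<c+d} - measure (NN m s) {..<c} = measure (NN m s) ({..<c+d} - {..<c})"
      using d by (subst finite_measure.finite_measure_Diff[OF NN_fin[OF s]]) auto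
    moreover have "measure (NN m s) ({..<c+d} - {..<c}) \<le> measure (NN m s) {c..c+d}"
      by (intro finite_measure.finite_measure_mono[OF NN_fin[OF s]]) auto
    ultimately show ?thesis using I by linarith
  qed
  show ?thesis using up lo u1 u2 pre[OF A] by linarith
qed


lemma abs_split:
  assumes s: "0 < s" and R: "R \<in> sets borel" and R0: "R \<subseteq> {0..}"
  shows "measure (abs_normal_law m s) R = measure (NN m s) R + measure (NN m s) (uminus -` R)"
proof -
  have uR[measurable]: "uminus -` R \<in> sets borel"
    by (rule measurable_sets_borel[OF _ R]) simp
  have "measure (abs_normal_law m s) R = measure (NN m s) (abs -` R \<inter> space (NN m s))"
    unfolding abs_normal_law_def using R by (intro measure_distr) auto
  also have "abs -` R \<inter> space (NN m s) = R \<union> (uminus -` R \<inter> {..<0})"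
    using R0 by (auto simp: abs_if split: if_splits)
  also have "measure (NN m s) (R \<union> (uminus -` R \<inter> {..<0})) = measure (NN m s) R + measure (NN m s) (uminus -` R \<inter> {..<0})"
    using R0 R by (intro finite_measure.finite_measure_Union[OF NN_fin[OF s]]) auto
  also have "measure (NN m s) (uminus -` R \<inter> {..<0}) = measure (NN m s) (uminus -` R)"
  proof -
    have sp: "measure (NN m s) (uminus -` R) = measure (NN m s) (uminus -` R \<inter> {..<0}) + measure (NN m s) (uminus -` R - {..<0})"
      by (rule split_meas[OF s]) auto
    have "measure (NN m s) (uminus -` R - {..<0}) \<le> measure (NN m s) {0..0}"
      using R0 by (intro finite_measure.finite_measure_mono[OF NN_fin[OF s]]) auto
    also have "\<dots> \<le> 0" using NN_Icc_meas[OF s, of 0 0 m] by simp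
    finally show ?thesis using sp measure_nonneg[of "NN m s" "uminus -` R - {..<0}"] by linarith
  qed
  finally show ?thesis .
qed

lemma TV_term:
  assumes s: "0 < s" and t: "0 \<le> t" and Q: "Q \<in> sets borel" and Q0: "Q \<subseteq> {0..}"
  shows "\<bar>measure (abs_normal_law m s) Q - measure (abs_normal_law m s) ((\<lambda>x. x + t) ` Q)\<bar> \<le> 2 * t / s"
proof -
  have im: "(\<lambda>x. x + t) ` Q = (\<lambda>x. x - t) -` Q"
    by (auto simp: image_iff intro!: bexI[where x="_ - t"])
  define Q' where "Q' = (\<lambda>x. x - t) -` Q"
  have Q'b: "Q' \<in> sets borel" unfolding Q'_def by (rule measurable_sets_borel[OF _ Q]) simp
  have Q'0: "Q' \<subseteq> {0..}" using Q0 t by (auto simp: Q'_def)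
  define B where "B = (\<lambda>x. x + t) -` (uminus -` Q)"
  have uQb: "uminus -` Q \<in> sets borel" by (rule measurable_sets_borel[OF _ Q]) simp
  have Bb: "B \<in> sets borel" unfolding B_def by (rule measurable_sets_borel[OF _ uQb]) simp
  have e1: "uminus -` Q = (\<lambda>x. x - t) -` B" by (auto simp: B_def)
  have e2: "uminus -` Q' = B" by (auto simp: B_def Q'_def algebra_simps)
  have k1: "\<bar>measure (NN m s) Q - measure (NN m s) Q'\<bar> \<le> t / s"
    unfolding Q'_def by (rule K[OF s t Q])
  have k2: "\<bar>measure (NN m s) B - measure (NN m s) ((\<lambda>x. x - t) -` B)\<bar> \<le> t / s"
    by (rule K[OF s t Bb])
  show ?thesis
    unfolding im Q'_def[symmetric] abs_split[OF s Q Q0] abs_split[OF s Q'b Q'0] e2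
    using k1 k2 e1 by (simp add: abs_le_iff)
qed

lemma TV_le:
  assumes s: "0 < s" and t: "0 \<le> t"
  shows "TV_shift (abs_normal_law m s) t \<le> 2 * t / s"
  unfolding TV_shift_def
  by (rule cSUP_least) (auto intro: TV_term[OF s t])

lemma TV_bdd:
  assumes s: "0 < s" and t: "0 \<le> t"
  shows "bdd_above ((\<lambda>Q. \<bar>measure (abs_normal_law m s) Q - measure (abs_normal_law m s) ((\<lambda>x. x + t) ` Q)\<bar>) ` {Q \<in> sets borel. Q \<subseteq> {0..}})"
  by (rule bdd_aboveI[where M="2 * t / s"]) (auto intro: TV_term[OF s t])

lemma TV_ge:
  assumes s: "0 < s" and t: "0 \<le> t" and Q: "Q \<in> sets borel" and Q0: "Q \<subseteq> {0..}"
  shows "\<bar>measure (abs_normal_law m s) Q - measure (abs_normal_law m s) ((\<lambda>x. x + t) ` Q)\<bar> \<le> TV_shift (abs_normal_law m s) t"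
  unfolding TV_shift_def
  by (rule cSUP_upper[OF _ TV_bdd[OF s t]]) (use Q Q0 in auto)

lemma TV_nonneg:
  assumes s: "0 < s" and t: "0 \<le> t"
  shows "0 \<le> TV_shift (abs_normal_law m s) t"
  using TV_ge[OF s t, of "{}" m] by simp


lemma img_Icc: "(\<lambda>x. x + c) ` {a..b} = {a + c..b + (c::real)}"
proof
  show "{a + c..b + c} \<subseteq> (\<lambda>x. x + c) ` {a..b}"
  proof
    fix y assume "y \<in> {a + c..b + c}"
    hence "y - c \<in> {a..b}" "y = (y - c) + c" by auto
    thus "y \<in> (\<lambda>x. x + c) ` {a..b}" by blast
  qed
qed auto

lemma theta_prob: "0 < s \<Longrightarrow> prob_space (abs_normal_law m s)"
  unfolding abs_normal_law_def by (intro prob_space.prob_space_distr NN_prob) auto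

lemma LB:
  assumes s: "0 < s" and sM: "s \<le> M"
  shows "\<exists>t\<in>{0..9*M}. 1/9 \<le> TV_shift (abs_normal_law m s) t"
proof -
  define \<theta> where "\<theta> = abs_normal_law m s"
  interpret th: prob_space \<theta> unfolding \<theta>_def by (rule theta_prob[OF s])
  have sets_th[simp]: "sets \<theta> = sets borel" by (simp add: \<theta>_def abs_normal_law_def)
  define a where "a = max 0 (\<bar>m\<bar> - s)"
  define b where "b = \<bar>m\<bar> + s"
  define L where "L = 3 * M"
  define Qj where "Qj = (\<lambda>j::nat. {a + j * L .. b + j * L})"
  have Lpos: "0 < L" using s sM by (simp add: L_def)
  have ab: "a \<le> b" "b - a \<le> 2 * s" "0 \<le> a" using s by (auto simp: a_def b_def)
  have Q0: "measure \<theta> (Qj 0) \<ge> 1/3"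
  proof -
    have md: "measure \<theta> (Qj 0) = measure (NN m s) (abs -` (Qj 0) \<inter> space (NN m s))"
      unfolding \<theta>_def abs_normal_law_def by (intro measure_distr) (auto simp: Qj_def)
    have pb: "abs -` (Qj 0) \<in> sets borel"
      by (rule measurable_sets_borel[of abs borel]) (auto simp: Qj_def)
    have "{m - s..m + s} \<subseteq> abs -` (Qj 0)"
      by (auto simp: Qj_def a_def b_def abs_if)
    moreover have "measure (NN m s) {m - s..m + s} \<le> measure (NN m s) (abs -` (Qj 0) \<inter> space (NN m s))"
      using pb calculation by (intro finite_measure.finite_measure_mono[OF NN_fin[OF s]]) auto
    moreover have "1/3 \<le> measure (NN m s) {m - s..m + s}"
      using NN_Icc_lower[OF s, of m] s by (simp add: NN_meas_eq)
    ultimately show ?thesis using md by simp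
  qed
  have disj: "Qj i \<inter> Qj j = {}" if "i < j" for i j
  proof -
    have "b + i * L < a + j * L"
    proof -
      have "real i + 1 \<le> real j" using that by simp
      hence "(real i + 1) * L \<le> real j * L" using Lpos by (intro mult_right_mono) auto
      moreover have "b - a < L" using ab sM s by (simp add: L_def)
      ultimately show ?thesis by (simp add: algebra_simps)
    qed
    thus ?thesis by (auto simp: Qj_def)
  qed
  have Qb[simp]: "Qj j \<in> sets \<theta>" "Qj j \<in> sets borel" for j by (simp_all add: Qj_def)
  have "measure \<theta> (Qj 0 \<union> Qj 1 \<union> Qj 2 \<union> Qj 3) = measure \<theta> (Qj 0) + measure \<theta> (Qj 1) + measure \<theta> (Qj 2) + measure \<theta> (Qj 3)"
  proof -
    have "measure \<theta> (Qj 0 \<union> Qj 1) = measure \<theta> (Qj 0) + measure \<theta> (Qj 1)"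
      using disj[of 0 1] by (intro th.finite_measure_Union) auto
    moreover have "measure \<theta> ((Qj 0 \<union> Qj 1) \<union> Qj 2) = measure \<theta> (Qj 0 \<union> Qj 1) + measure \<theta> (Qj 2)"
      using disj[of 0 2] disj[of 1 2] by (intro th.finite_measure_Union) auto
    moreover have "measure \<theta> ((Qj 0 \<union> Qj 1 \<union> Qj 2) \<union> Qj 3) = measure \<theta> (Qj 0 \<union> Qj 1 \<union> Qj 2) + measure \<theta> (Qj 3)"
      using disj[of 0 3] disj[of 1 3] disj[of 2 3] by (intro th.finite_measure_Union) (auto intro!: sets.Un)
    ultimately show ?thesis by simp
  qed
  moreover have "measure \<theta> (Qj 0 \<union> Qj 1 \<union> Qj 2 \<union> Qj 3) \<le> 1" by simp
  ultimately have sum3: "measure \<theta> (Qj 1) + measure \<theta> (Qj 2) + measure \<theta> (Qj 3) \<le> 2/3"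
    using Q0 by linarith
  obtain j where j: "j \<in> {1,2,3::nat}" "measure \<theta> (Qj j) \<le> 2/9"
  proof (cases "measure \<theta> (Qj 1) \<le> 2/9")
    case True thus ?thesis using that[of 1] by simp
  next
    case F1: False
    show ?thesis
    proof (cases "measure \<theta> (Qj 2) \<le> 2/9")
      case True thus ?thesis using that[of 2] by simp
    next
      case False
      hence "measure \<theta> (Qj 3) \<le> 2/9" using F1 sum3 by linarith
      thus ?thesis using that[of 3] by simp
    qed
  qed
  have img: "(\<lambda>x. x + j * L) ` Qj 0 = Qj j" by (simp add: Qj_def img_Icc)
  have "1/9 \<le> \<bar>measure \<theta> (Qj 0) - measure \<theta> ((\<lambda>x. x + j * L) ` Qj 0)\<bar>" unfolding img using Q0 j by simp
  also have "\<dots> \<le> TV_shift \<theta> (j * L)"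
    unfolding \<theta>_def by (rule TV_ge[OF s]) (use Lpos ab in \<open>auto simp: Qj_def\<close>)
  finally have "1/9 \<le> TV_shift \<theta> (j * L)" .
  moreover have "j * L \<in> {0..9*M}"
  proof -
    have "real j \<le> 3" using j by auto
    hence "j * L \<le> 3 * L" using Lpos by (intro mult_right_mono) auto
    thus ?thesis using Lpos by (simp add: L_def)
  qed
  ultimately show ?thesis unfolding \<theta>_def by blast
qed


lemma SUP_le:
  assumes s: "0 < s" and S: "0 < S"
  shows "(SUP t \<in> {0..S}. TV_shift (abs_normal_law m s) t) \<le> 2 * S / s"
proof (rule cSUP_least)
  show "{0..S} \<noteq> {}" using S by simp
  fix t assume t: "t \<in> {0..S}"
  have "TV_shift (abs_normal_law m s) t \<le> 2 * t / s" using t by (intro TV_le s) auto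
  also have "\<dots> \<le> 2 * S / s" using t s by (intro divide_right_mono) auto
  finally show "TV_shift (abs_normal_law m s) t \<le> 2 * S / s" .
qed

lemma SUP_bdd:
  assumes s: "0 < s" and S: "0 < S"
  shows "bdd_above ((\<lambda>t. TV_shift (abs_normal_law m s) t) ` {0..S})"
proof (rule bdd_aboveI[where M="2 * S / s"])
  fix x assume "x \<in> (\<lambda>t. TV_shift (abs_normal_law m s) t) ` {0..S}"
  then obtain t where t: "t \<in> {0..S}" "x = TV_shift (abs_normal_law m s) t" by auto
  have "TV_shift (abs_normal_law m s) t \<le> 2 * t / s" using t by (intro TV_le s) auto
  also have "\<dots> \<le> 2 * S / s" using t s by (intro divide_right_mono) auto
  finally show "x \<le> 2 * S / s" using t by simp
qed

lemma SUP_ge: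
  assumes s: "0 < s" and S: "0 < S" and t: "t \<in> {0..S}"
  shows "TV_shift (abs_normal_law m s) t \<le> (SUP t \<in> {0..S}. TV_shift (abs_normal_law m s) t)"
  by (rule cSUP_upper[OF t SUP_bdd[OF s S]])

theorem mainTheorem2:
  fixes m \<sigma> :: "nat \<Rightarrow> real"
  assumes "\<And>k. \<sigma> k > 0"
  shows "LTC (\<lambda>k. abs_normal_law (m k) (\<sigma> k)) \<longleftrightarrow> filterlim \<sigma> at_top sequentially"
proof
  assume L: "LTC (\<lambda>k. abs_normal_law (m k) (\<sigma> k))"
  show "filterlim \<sigma> at_top sequentially"
  proof (rule ccontr)
    assume "\<not> filterlim \<sigma> at_top sequentially"
    then obtain Z where "\<not> eventually (\<lambda>k. Z \<le> \<sigma> k) sequentially"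
      unfolding filterlim_at_top by blast
    hence "frequently (\<lambda>k. \<not> Z \<le> \<sigma> k) sequentially" by (simp add: not_eventually)
    hence fr: "frequently (\<lambda>k. \<sigma> k \<le> max Z 1) sequentially"
      by (rule frequently_elim1) auto
    define M where "M = max Z 1"
    have M: "0 < M" by (simp add: M_def)
    have "(\<lambda>k. SUP t \<in> {0..9*M}. TV_shift (abs_normal_law (m k) (\<sigma> k)) t) \<longlonglongrightarrow> 0"
      using L M unfolding LTC_def by simp
    hence ev: "eventually (\<lambda>k. (SUP t \<in> {0..9*M}. TV_shift (abs_normal_law (m k) (\<sigma> k)) t) < 1/9) sequentially"
      by (rule order_tendstoD) simp
    have "frequently (\<lambda>k. \<sigma> k \<le> M \<and> (SUP t \<in> {0..9*M}. TV_shift (abs_normal_law (m k) (\<sigma> k)) t) < 1/9) sequentially"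
      using fr ev unfolding M_def by (rule frequently_rev_mp[OF _ eventually_mono]) auto
    then obtain k where k: "\<sigma> k \<le> M" "(SUP t \<in> {0..9*M}. TV_shift (abs_normal_law (m k) (\<sigma> k)) t) < 1/9"
      using frequently_ex by blast
    obtain t where t: "t \<in> {0..9*M}" "1/9 \<le> TV_shift (abs_normal_law (m k) (\<sigma> k)) t"
      using LB[OF assms k(1), of "m k"] by blast
    have "TV_shift (abs_normal_law (m k) (\<sigma> k)) t \<le> (SUP t \<in> {0..9*M}. TV_shift (abs_normal_law (m k) (\<sigma> k)) t)"
      using M t by (intro SUP_ge assms) auto
    thus False using k t by linarith
  qed
next
  assume F: "filterlim \<sigma> at_top sequentially"
  show "LTC (\<lambda>k. abs_normal_law (m k) (\<sigma> k))"
    unfolding LTC_def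
  proof (intro allI impI)
    fix S :: real assume S: "0 < S"
    have h: "(\<lambda>k. (2 * S) * inverse (\<sigma> k)) \<longlonglongrightarrow> 0"
      by (intro tendsto_mult_right_zero tendsto_inverse_0_at_top F)
    show "(\<lambda>k. SUP s \<in> {0..S}. TV_shift (abs_normal_law (m k) (\<sigma> k)) s) \<longlonglongrightarrow> 0"
    proof (rule tendsto_sandwich[OF _ _ tendsto_const h])
      show "\<forall>\<^sub>F k in sequentially. 0 \<le> (SUP s \<in> {0..S}. TV_shift (abs_normal_law (m k) (\<sigma> k)) s)"
      proof (intro always_eventually allI)
        fix k
        have "0 \<le> TV_shift (abs_normal_law (m k) (\<sigma> k)) 0" by (intro TV_nonneg assms) simp
        also have "\<dots> \<le> (SUP s \<in> {0..S}. TV_shift (abs_normal_law (m k) (\<sigma> k)) s)"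
          using S by (intro SUP_ge assms) auto
        finally show "0 \<le> (SUP s \<in> {0..S}. TV_shift (abs_normal_law (m k) (\<sigma> k)) s)" .
      qed
      show "\<forall>\<^sub>F k in sequentially. (SUP s \<in> {0..S}. TV_shift (abs_normal_law (m k) (\<sigma> k)) s) \<le> 2 * S * inverse (\<sigma> k)"
        using SUP_le[OF assms S] by (simp add: divide_inverse)
    qed
  qed
qed

end
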